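(* Let $T\in\mathcal{KC}(V)$ be such that $T$ and $\overline{T}$ are of type $\omega\in(0,\pi)$. Then for every $\theta\in(\omega,\pi)$ there exists $C_\theta\geq0$ such that $\|Q_{c,s}^{-1}(T)\|\leq C_\theta/|s|^2$ for every $s\in S_\theta^c\setminus\{0\}$.
   Context: $\mathbb{H}$ denotes the quaternions $s=s_0+s_1e_1+s_2e_2+s_3e_3$ with $e_1^2=e_2^2=e_3^2=-1$, $e_1e_2=-e_2e_1=e_3$, $e_2e_3=-e_3e_2=e_1$, $e_3e_1=-e_1e_3=e_2$; $|s|$ is the Euclidean norm, $\overline{e_i}=-e_i$ for $i=1,2,3$, $\mathbb{S}=\{s:s_0=0,|s|=1\}$. For $\omega\in(0,\pi)$, $S_\omega=\{re^{J\phi}: r>0, J\in\mathbb{S}, |\phi|<\omega\}$, $\overline{S_\omega}$ its closure, $S_\omega^c=\mathbb{H}\setminus S_\omega$. $V$ is a two-sided Banach space over $\mathbb{H}$, $\mathcal{I}$ the identity. $\mathcal{KC}(V)$ is the class of closed right-linear operators $T$ with two-sided linear domain such that $T=T_0+e_1T_1+e_2T_2+e_3T_3$ with two-sided linear $T_i$, $\operatorname{dom}(T_i)=\operatorname{dom}(T)$, $\operatorname{dom}(T^2)\subseteq\operatorname{dom}(T_iT_j)$ and $T_iT_j=T_jT_i$ on $\operatorname{dom}(T^2)$. $\overline{T}:=T_0-e_1T_1-e_2T_2-e_3T_3$, $|T|^2:=T_0^2+T_1^2+T_2^2+T_3^2$, $Q_{c,s}(T):=s^2\mathcal{I}-2sT_0+|T|^2$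 with domain $\operatorname{dom}(T^2)$. $\rho_S(T)$ is the set of $s\in\mathbb{H}$ for which $Q_{c,s}(T):\operatorname{dom}(T^2)\to V$ is bijective, $Q_{c,s}^{-1}(T)$ the inverse, $\sigma_S(T)=\mathbb{H}\setminus\rho_S(T)$. $S_L^{-1}(s,T):=(s\mathcal{I}-\overline{T})Q_{c,s}^{-1}(T)$ and $S_R^{-1}(s,T):=sQ_{c,s}^{-1}(T)-\sum_{i=0}^3T_iQ_{c,s}^{-1}(T)\overline{e_i}$ ($e_0=1$). $T\in\mathcal{KC}(V)$ is of type $\omega$ if $\sigma_S(T)\subseteq\overline{S_\omega}$ and for every $\theta\in(\omega,\pi)$ there is $C_\theta\geq0$ with $\|S_L^{-1}(s,T)\|\leq C_\theta/|s|$ and $\|S_R^{-1}(s,T)\|\leq C_\theta/|s|$ for all $s\in S_\theta^c\setminus\{0\}$. *)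

theory Defs
  imports "HOL-Analysis.Analysis"
begin

section \<open>Quaternions, modelled as real^4 (components 0,1,2,3 = s0,s1,s2,s3)\<close>

type_synonym quat = "real^4"

text \<open>Addition, zero, negation, the Euclidean norm |s| and the topology are those of real^4.
  Quaternion multiplication is defined explicitly.\<close>

definition mkq :: "real \<Rightarrow> real \<Rightarrow> real \<Rightarrow> real \<Rightarrow> quat" where
  "mkq a0 a1 a2 a3 = (\<chi> i. if i = 0 then a0 else if i = 1 then a1 else if i = 2 then a2 else a3)"

definition qmult :: "quat \<Rightarrow> quat \<Rightarrow> quat" where
  "qmult a b = mkq
     (a$0*b$0 - a$1*b$1 - a$2*b$2 - a$3*b$3)
     (a$0*b$1 + a$1*b$0 + a$2*b$3 - a$3*b$2)
     (a$0*b$2 - a$1*b$3 + a$2*b$0 + a$3*b$1)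
     (a$0*b$3 + a$1*b$2 - a$2*b$1 + a$3*b$0)"

definition qreal :: "real \<Rightarrow> quat" where
  "qreal r = mkq r 0 0 0"

definition qcnj :: "quat \<Rightarrow> quat" where
  "qcnj a = mkq (a$0) (- a$1) (- a$2) (- a$3)"

definition qe :: "nat \<Rightarrow> quat" where
  "qe i = (if i = 0 then mkq 1 0 0 0 else if i = 1 then mkq 0 1 0 0
           else if i = 2 then mkq 0 0 1 0 else mkq 0 0 0 1)"

definition imag_sphere :: "quat set" where
  "imag_sphere = {s. s$0 = 0 \<and> norm s = 1}"

definition sector :: "real \<Rightarrow> quat set" where
  "sector \<omega> = {qmult (qreal r) (qreal (cos \<phi>) + qmult J (qreal (sin \<phi>))) | r \<phi> J.
                  r > 0 \<and> J \<in> imag_sphere \<and> \<bar>\<phi>\<bar> < \<omega>}"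

text \<open>V is a real Banach space ('v :: banach) with a left action lm and a right action rm of
  the quaternions, compatible with the real structure and the norm.\<close>
definition two_sided_qbanach :: "(quat \<Rightarrow> 'v::banach \<Rightarrow> 'v) \<Rightarrow> ('v \<Rightarrow> quat \<Rightarrow> 'v) \<Rightarrow> bool" where
  "two_sided_qbanach lm rm \<longleftrightarrow>
     (\<forall>a b v. lm (a + b) v = lm a v + lm b v) \<and>
     (\<forall>a v w. lm a (v + w) = lm a v + lm a w) \<and>
     (\<forall>a b v. lm (qmult a b) v = lm a (lm b v)) \<and>
     (\<forall>r v. lm (qreal r) v = r *\<^sub>R v) \<and>
     (\<forall>a b v. rm v (a + b) = rm v a + rm v b) \<and>
     (\<forall>a v w. rm (v + w) a = rm v a + rm w a) \<and>
     (\<forall>a b v. rm v (qmult a b) = rm (rm v a) b) \<and>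
     (\<forall>r v. rm v (qreal r) = r *\<^sub>R v) \<and>
     (\<forall>a b v. lm a (rm v b) = rm (lm a v) b) \<and>
     (\<forall>a v. norm (lm a v) \<le> norm a * norm v) \<and>
     (\<forall>a v. norm (rm v a) \<le> norm a * norm v)"

definition two_sided_subspace :: "(quat \<Rightarrow> 'v::banach \<Rightarrow> 'v) \<Rightarrow> ('v \<Rightarrow> quat \<Rightarrow> 'v) \<Rightarrow> 'v set \<Rightarrow> bool" where
  "two_sided_subspace lm rm D \<longleftrightarrow> 0 \<in> D \<and> (\<forall>v\<in>D. \<forall>w\<in>D. v + w \<in> D) \<and>
     (\<forall>a. \<forall>v\<in>D. lm a v \<in> D \<and> rm v a \<in> D)"

definition two_sided_linear_on :: "(quat \<Rightarrow> 'v::banach \<Rightarrow> 'v) \<Rightarrow> ('v \<Rightarrow> quat \<Rightarrow> 'v) \<Rightarrow> 'v set \<Rightarrow> ('v \<Rightarrow> 'v) \<Rightarrow> bool" where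
  "two_sided_linear_on lm rm D A \<longleftrightarrow>
     (\<forall>v\<in>D. \<forall>w\<in>D. A (v + w) = A v + A w) \<and>
     (\<forall>a. \<forall>v\<in>D. A (lm a v) = lm a (A v) \<and> A (rm v a) = rm (A v) a)"

definition right_linear_on :: "('v \<Rightarrow> quat \<Rightarrow> 'v) \<Rightarrow> 'v set \<Rightarrow> ('v::banach \<Rightarrow> 'v) \<Rightarrow> bool" where
  "right_linear_on rm D A \<longleftrightarrow>
     (\<forall>v\<in>D. \<forall>w\<in>D. A (v + w) = A v + A w) \<and> (\<forall>a. \<forall>v\<in>D. A (rm v a) = rm (A v) a)"

text \<open>An operator is given by its domain D and its components Ts 0, ..., Ts 3 (values outside
  D are irrelevant).\<close>
definition op_of :: "(quat \<Rightarrow> 'v::banach \<Rightarrow> 'v) \<Rightarrow> (nat \<Rightarrow> 'v \<Rightarrow> 'v) \<Rightarrow> 'v \<Rightarrow> 'v" where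
  "op_of lm Ts v = (\<Sum>i<4. lm (qe i) (Ts i v))"

definition conj_comps :: "(nat \<Rightarrow> 'v::banach \<Rightarrow> 'v) \<Rightarrow> nat \<Rightarrow> 'v \<Rightarrow> 'v" where
  "conj_comps Ts i = (if i = 0 then Ts 0 else (\<lambda>v. - Ts i v))"

definition dom_sq :: "(quat \<Rightarrow> 'v::banach \<Rightarrow> 'v) \<Rightarrow> 'v set \<Rightarrow> (nat \<Rightarrow> 'v \<Rightarrow> 'v) \<Rightarrow> 'v set" where
  "dom_sq lm D Ts = {v \<in> D. op_of lm Ts v \<in> D}"

definition in_KC :: "(quat \<Rightarrow> 'v::banach \<Rightarrow> 'v) \<Rightarrow> ('v \<Rightarrow> quat \<Rightarrow> 'v) \<Rightarrow> 'v set \<Rightarrow> (nat \<Rightarrow> 'v \<Rightarrow> 'v) \<Rightarrow> bool" where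
  "in_KC lm rm D Ts \<longleftrightarrow>
     two_sided_subspace lm rm D \<and>
     right_linear_on rm D (op_of lm Ts) \<and>
     closed {(v, op_of lm Ts v) | v. v \<in> D} \<and>
     (\<forall>i<4. two_sided_linear_on lm rm D (Ts i)) \<and>
     (\<forall>j<4. dom_sq lm D Ts \<subseteq> {v \<in> D. Ts j v \<in> D}) \<and>
     (\<forall>i<4. \<forall>j<4. \<forall>v \<in> dom_sq lm D Ts. Ts i (Ts j v) = Ts j (Ts i v))"

definition Qcs :: "(quat \<Rightarrow> 'v::banach \<Rightarrow> 'v) \<Rightarrow> (nat \<Rightarrow> 'v \<Rightarrow> 'v) \<Rightarrow> quat \<Rightarrow> 'v \<Rightarrow> 'v" where
  "Qcs lm Ts s v = lm (qmult s s) v - lm (qmult (qreal 2) s) (Ts 0 v) + (\<Sum>i<4. Ts i (Ts i v))"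

definition S_resolvent_set :: "(quat \<Rightarrow> 'v::banach \<Rightarrow> 'v) \<Rightarrow> 'v set \<Rightarrow> (nat \<Rightarrow> 'v \<Rightarrow> 'v) \<Rightarrow> quat set" where
  "S_resolvent_set lm D Ts = {s. bij_betw (Qcs lm Ts s) (dom_sq lm D Ts) UNIV}"

definition S_spectrum :: "(quat \<Rightarrow> 'v::banach \<Rightarrow> 'v) \<Rightarrow> 'v set \<Rightarrow> (nat \<Rightarrow> 'v \<Rightarrow> 'v) \<Rightarrow> quat set" where
  "S_spectrum lm D Ts = UNIV - S_resolvent_set lm D Ts"

definition Qcs_inv :: "(quat \<Rightarrow> 'v::banach \<Rightarrow> 'v) \<Rightarrow> 'v set \<Rightarrow> (nat \<Rightarrow> 'v \<Rightarrow> 'v) \<Rightarrow> quat \<Rightarrow> 'v \<Rightarrow> 'v" where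
  "Qcs_inv lm D Ts s = the_inv_into (dom_sq lm D Ts) (Qcs lm Ts s)"

definition SL_inv :: "(quat \<Rightarrow> 'v::banach \<Rightarrow> 'v) \<Rightarrow> 'v set \<Rightarrow> (nat \<Rightarrow> 'v \<Rightarrow> 'v) \<Rightarrow> quat \<Rightarrow> 'v \<Rightarrow> 'v" where
  "SL_inv lm D Ts s v = lm s (Qcs_inv lm D Ts s v) - op_of lm (conj_comps Ts) (Qcs_inv lm D Ts s v)"

text \<open>S_R^{-1}(s,T) = s Q^{-1} - sum_i T_i Q^{-1} conj(e_i), where an operator followed by a
  scalar a denotes (A a)(v) = A(a v).\<close>
definition SR_inv :: "(quat \<Rightarrow> 'v::banach \<Rightarrow> 'v) \<Rightarrow> 'v set \<Rightarrow> (nat \<Rightarrow> 'v \<Rightarrow> 'v) \<Rightarrow> quat \<Rightarrow> 'v \<Rightarrow> 'v" where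
  "SR_inv lm D Ts s v = lm s (Qcs_inv lm D Ts s v)
      - (\<Sum>i<4. Ts i (Qcs_inv lm D Ts s (lm (qcnj (qe i)) v)))"

definition op_norm_le :: "('v::banach \<Rightarrow> 'v) \<Rightarrow> real \<Rightarrow> bool" where
  "op_norm_le A c \<longleftrightarrow> (\<forall>v. norm (A v) \<le> c * norm v)"

definition of_type :: "(quat \<Rightarrow> 'v::banach \<Rightarrow> 'v) \<Rightarrow> ('v \<Rightarrow> quat \<Rightarrow> 'v) \<Rightarrow> 'v set \<Rightarrow> (nat \<Rightarrow> 'v \<Rightarrow> 'v) \<Rightarrow> real \<Rightarrow> bool" where
  "of_type lm rm D Ts \<omega> \<longleftrightarrow>
     in_KC lm rm D Ts \<and>
     S_spectrum lm D Ts \<subseteq> closure (sector \<omega>) \<and>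
     (\<forall>\<theta>. \<omega> < \<theta> \<and> \<theta> < pi \<longrightarrow> (\<exists>C\<ge>0. \<forall>s \<in> (UNIV - sector \<theta>) - {0}.
        op_norm_le (SL_inv lm D Ts s) (C / norm s) \<and> op_norm_le (SR_inv lm D Ts s) (C / norm s)))"

end

theory Submission imports Defs begin
lemma mkq_nth[simp]: "mkq a b c d $ 0 = a" "mkq a b c d $ 1 = b" "mkq a b c d $ 2 = c" "mkq a b c d $ 3 = d"
  by (simp_all add: mkq_def)

lemma four_eq_zero: "(4::4) = 0" by simp

lemma quat_eqI: "(x::quat) $ 0 = y $ 0 \<Longrightarrow> x $ 1 = y $ 1 \<Longrightarrow> x $ 2 = y $ 2 \<Longrightarrow> x $ 3 = y $ 3 \<Longrightarrow> x = y"
  unfolding vec_eq_iff forall_4 four_eq_zero by simp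

lemma norm_quat: "norm (x::quat) = sqrt ((x$0)^2 + (x$1)^2 + (x$2)^2 + (x$3)^2)"
  unfolding norm_vec_def L2_set_def sum_4 four_eq_zero by (simp add: ac_simps)
lemma qmult_nth[simp]:
  "qmult a b $ 0 = a$0*b$0 - a$1*b$1 - a$2*b$2 - a$3*b$3"
  "qmult a b $ 1 = a$0*b$1 + a$1*b$0 + a$2*b$3 - a$3*b$2"
  "qmult a b $ 2 = a$0*b$2 - a$1*b$3 + a$2*b$0 + a$3*b$1"
  "qmult a b $ 3 = a$0*b$3 + a$1*b$2 - a$2*b$1 + a$3*b$0"
  by (simp_all add: qmult_def)

lemma qreal_nth[simp]: "qreal r $ 0 = r" "qreal r $ 1 = 0" "qreal r $ 2 = 0" "qreal r $ 3 = 0"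
  by (simp_all add: qreal_def)

lemma sector_imp:
  assumes "x \<in> sector \<theta>" "\<theta> \<le> pi"
  shows "x \<noteq> 0 \<and> norm x * cos \<theta> < x$0"
proof -
  obtain r \<phi> J where x: "x = qmult (qreal r) (qreal (cos \<phi>) + qmult J (qreal (sin \<phi>)))"
    and r: "r > 0" and J: "J \<in> imag_sphere" and ph: "\<bar>\<phi>\<bar> < \<theta>"
    using assms unfolding sector_def by blast
  have J0: "J$0 = 0" and J1: "(J$1)^2 + (J$2)^2 + (J$3)^2 = 1"
    using J unfolding imag_sphere_def norm_quat by auto
  have x0: "x$0 = r * cos \<phi>" using J0 by (simp add: x)
  have "(x$0)^2 + (x$1)^2 + (x$2)^2 + (x$3)^2 = r^2 * ((cos \<phi>)^2 + (sin \<phi>)^2 * ((J$1)^2 + (J$2)^2 + (J$3)^2))"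
    using J0 by (simp add: x power2_eq_square algebra_simps)
  also have "\<dots> = r^2" using J1 by simp
  finally have nx: "norm x = r" unfolding norm_quat using r by simp
  have "cos \<theta> < cos \<bar>\<phi>\<bar>"
    using ph assms(2) by (subst cos_mono_less_eq) auto
  hence "cos \<theta> < cos \<phi>" by simp
  hence "r * cos \<theta> < r * cos \<phi>" using r by simp
  thus ?thesis using nx x0 r by auto
qed


lemma imp_sector:
  assumes "x \<noteq> 0" "norm x * cos \<theta> < x$0" "0 < \<theta>" "\<theta> < pi"
  shows "x \<in> sector \<theta>"
proof -
  define r where "r = norm x"
  have r: "r > 0" using assms(1) r_def by simp
  define c where "c = x$0 / r"
  have x0le: "\<bar>x$0\<bar> \<le> r" unfolding r_def by (rule component_le_norm_cart)
  have c1: "-1 \<le> c" "c \<le> 1" using x0le r unfolding c_def by (auto simp: abs_le_iff field_simps)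
  define \<phi> where "\<phi> = arccos c"
  define m where "m = sqrt ((x$1)^2 + (x$2)^2 + (x$3)^2)"
  have m0: "m \<ge> 0" unfolding m_def by simp
  have rr: "r^2 = (x$0)^2 + m^2" unfolding r_def m_def norm_quat by simp
  have cphi: "cos \<phi> = c" unfolding \<phi>_def using c1 by simp
  have "sin \<phi> = sqrt (1 - c^2)" unfolding \<phi>_def using c1 by (simp add: sin_arccos)
  also have "1 - c^2 = (m / r)^2"
  proof -
    have "c^2 + (m/r)^2 = ((x$0)^2 + m^2) / r^2" unfolding c_def by (simp add: power_divide add_divide_distrib)
    also have "\<dots> = 1" by (subst rr[symmetric]) (use r in simp)
    finally show ?thesis by simp
  qed
  also have "sqrt ((m/r)^2) = m / r" using m0 r by simp
  finally have sphi: "sin \<phi> = m / r" .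
  define J where "J = (if m = 0 then mkq 0 1 0 0 else mkq 0 (x$1/m) (x$2/m) (x$3/m))"
  have "J \<in> imag_sphere"
  proof (cases "m = 0")
    case True thus ?thesis unfolding imag_sphere_def J_def norm_quat by simp
  next
    case False
    have "(x$1/m)^2 + (x$2/m)^2 + (x$3/m)^2 = ((x$1)^2 + (x$2)^2 + (x$3)^2) / m^2"
      by (simp add: power_divide add_divide_distrib)
    also have "(x$1)^2 + (x$2)^2 + (x$3)^2 = m^2" unfolding m_def by simp
    finally have "(x$1/m)^2 + (x$2/m)^2 + (x$3/m)^2 = 1" using False by simp
    hence "norm J = 1" using False unfolding J_def norm_quat by simp
    moreover have "J$0 = 0" unfolding J_def by simp
    ultimately show ?thesis unfolding imag_sphere_def by simp
  qed
  moreover have "\<bar>\<phi>\<bar> < \<theta>"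
  proof -
    have "norm x * cos \<theta> / r < x$0 / r" using assms(2) r by (simp add: divide_strict_right_mono)
    hence "cos \<theta> < c" using r unfolding c_def r_def by simp
    hence "arccos c < arccos (cos \<theta>)" using c1 by (intro arccos_less_arccos) auto
    moreover have "arccos (cos \<theta>) = \<theta>" using assms by (simp add: arccos_cos)
    moreover have "0 \<le> \<phi>" unfolding \<phi>_def using c1 by (simp add: arccos_lbound)
    ultimately show ?thesis unfolding \<phi>_def by simp
  qed
  moreover have "x = qmult (qreal r) (qreal (cos \<phi>) + qmult J (qreal (sin \<phi>)))"
  proof (cases "m = 0")
    case True
    hence "(x$1)^2 + (x$2)^2 + (x$3)^2 = 0" unfolding m_def by simp
    hence "x$1 = 0 \<and> x$2 = 0 \<and> x$3 = 0" by (smt (verit) zero_le_power2 power_not_zero)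
    thus ?thesis using True r unfolding cphi sphi J_def c_def
      apply (intro quat_eqI)
      apply (simp only: qmult_nth qreal_nth vector_add_component mkq_nth if_True)
      apply simp
      apply (simp only: qmult_nth qreal_nth vector_add_component mkq_nth if_True)
      apply simp
      apply (simp only: qmult_nth qreal_nth vector_add_component mkq_nth if_True)
      apply simp
      apply (simp only: qmult_nth qreal_nth vector_add_component mkq_nth if_True)
      apply simp
      done
  next
    case False
    show ?thesis using False r m0 unfolding cphi sphi J_def c_def
      apply (intro quat_eqI)
      apply (simp only: qmult_nth qreal_nth vector_add_component mkq_nth if_False)
      apply simp
      apply (simp only: qmult_nth qreal_nth vector_add_component mkq_nth if_False)
      apply simp
      apply (simp only: qmult_nth qreal_nth vector_add_component mkq_nth if_False)
      apply simp
      apply (simp only: qmult_nth qreal_nth vector_add_component mkq_nth if_False)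
      apply simp
      done
  qed
  ultimately have "\<exists>r' \<phi>' J'. x = qmult (qreal r') (qreal (cos \<phi>') + qmult J' (qreal (sin \<phi>'))) \<and> r' > 0 \<and> J' \<in> imag_sphere \<and> \<bar>\<phi>'\<bar> < \<theta>"
    using r by (intro exI[of _ r] exI[of _ \<phi>] exI[of _ J]) simp
  thus ?thesis unfolding sector_def by (simp only: mem_Collect_eq)
qed

lemma sector_iff: "0 < \<theta> \<Longrightarrow> \<theta> < pi \<Longrightarrow> x \<in> sector \<theta> \<longleftrightarrow> x \<noteq> 0 \<and> norm x * cos \<theta> < x$0"
  using sector_imp imp_sector by (metis less_imp_le)


lemma sum4: "(\<Sum>i<(4::nat). f i) = f 0 + f 1 + f 2 + f 3"
  by (simp add: eval_nat_numeral)

lemma qmult_qreal_left: "qmult (qreal r) a = r *\<^sub>R a"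
  by (rule quat_eqI) simp_all

lemma qmult_qreal_right: "qmult a (qreal r) = r *\<^sub>R a"
  by (rule quat_eqI) simp_all

lemma qe0: "qe 0 = qreal 1" by (simp add: qe_def qreal_def)

lemma norm_qe: "norm (qe i) = 1"
  by (simp add: qe_def norm_quat)

lemma qinv_mult: "qmult ((1 / (norm s)^2) *\<^sub>R qcnj s) s = qreal ((1 / (norm s)^2) * (norm s)^2)"
proof -
  have "qmult ((1 / (norm s)^2) *\<^sub>R qcnj s) s = qmult (qreal (1 / (norm s)^2)) (qmult (qcnj s) s)"
    by (rule quat_eqI) (simp_all add: qcnj_def algebra_simps)
  also have "qmult (qcnj s) s = qreal ((norm s)^2)"
    unfolding norm_quat by (rule quat_eqI) (simp_all add: qcnj_def power2_eq_square algebra_simps)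
  also have "qmult (qreal (1 / (norm s)^2)) (qreal ((norm s)^2)) = qreal ((1 / (norm s)^2) * (norm s)^2)"
    by (rule quat_eqI) simp_all
  finally show ?thesis .
qed

lemma norm_qcnj: "norm (qcnj s) = norm s"
  unfolding norm_quat by (simp add: qcnj_def)

context fixes lm :: "quat \<Rightarrow> 'v::banach \<Rightarrow> 'v" and rm assumes qb: "two_sided_qbanach lm rm"
begin

lemma lm_add: "lm a (v + w) = lm a v + lm a w"
  using qb unfolding two_sided_qbanach_def by simp

lemma lm_mult: "lm (qmult a b) v = lm a (lm b v)"
  using qb unfolding two_sided_qbanach_def by simp

lemma lm_qreal: "lm (qreal r) v = r *\<^sub>R v"
  using qb unfolding two_sided_qbanach_def by simp

lemma lm_norm: "norm (lm a v) \<le> norm a * norm v"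
  using qb unfolding two_sided_qbanach_def by simp

lemma lm_zero: "lm a 0 = 0"
  using lm_add[of a 0 0] by simp

lemma lm_minus: "lm a (- v) = - lm a v"
  using lm_add[of a v "- v"] lm_zero[of a] by (simp add: eq_neg_iff_add_eq_0 add.commute)

lemma lm_diff: "lm a (v - w) = lm a v - lm a w"
  using lm_add[of a v "- w"] lm_minus[of a w] by simp

lemma lm_scaleR: "lm a (r *\<^sub>R v) = r *\<^sub>R lm a v"
proof -
  have "lm a (r *\<^sub>R v) = lm a (lm (qreal r) v)" by (simp add: lm_qreal)
  also have "\<dots> = lm (qmult a (qreal r)) v" by (simp add: lm_mult)
  also have "qmult a (qreal r) = qmult (qreal r) a" by (simp add: qmult_qreal_left qmult_qreal_right)
  also have "lm (qmult (qreal r) a) v = r *\<^sub>R lm a v" by (simp add: lm_mult lm_qreal)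
  finally show ?thesis .
qed

lemma lm_scaleRq: "lm (r *\<^sub>R a) v = r *\<^sub>R lm a v"
  using lm_mult[of "qreal r" a v] by (simp add: qmult_qreal_left lm_qreal)

lemma lm_one: "lm (qreal 1) v = v"
  by (simp add: lm_qreal)

lemma norm_lm_ge: assumes "s \<noteq> 0" shows "norm s * norm v \<le> norm (lm s v)"
proof -
  define si where "si = (1 / (norm s)^2) *\<^sub>R qcnj s"
  have "qmult si s = qreal 1" unfolding si_def qinv_mult using assms by simp
  hence "v = lm si (lm s v)" by (metis lm_mult lm_one)
  hence "norm v \<le> norm si * norm (lm s v)" by (metis lm_norm)
  also have "norm si = 1 / norm s" unfolding si_def using assms by (simp add: norm_qcnj power2_eq_square)
  finally have "norm v \<le> norm (lm s v) / norm s" by simp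
  hence "norm v * norm s \<le> norm (lm s v)" using assms by (simp add: pos_le_divide_eq)
  thus ?thesis by (metis mult.commute)
qed

end



lemma subspace_facts:
  assumes qb: "two_sided_qbanach lm rm" and sub: "two_sided_subspace lm rm D"
  shows "0 \<in> D" "v \<in> D \<Longrightarrow> w \<in> D \<Longrightarrow> v + w \<in> D" "v \<in> D \<Longrightarrow> lm a v \<in> D"
    "v \<in> D \<Longrightarrow> - v \<in> D"
proof -
  show "0 \<in> D" "v \<in> D \<Longrightarrow> w \<in> D \<Longrightarrow> v + w \<in> D" "v \<in> D \<Longrightarrow> lm a v \<in> D"
    using sub unfolding two_sided_subspace_def by auto
  assume "v \<in> D"
  hence "lm (qreal (-1)) v \<in> D" using sub unfolding two_sided_subspace_def by auto
  thus "- v \<in> D" using lm_qreal[OF qb] by simp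
qed

lemma lin_minus:
  assumes qb: "two_sided_qbanach lm rm" and lin: "two_sided_linear_on lm rm D A" and v: "v \<in> D"
  shows "A (- v) = - A v"
proof -
  have "A (lm (qreal (-1)) v) = lm (qreal (-1)) (A v)" using lin v unfolding two_sided_linear_on_def by blast
  thus ?thesis using lm_qreal[OF qb] by simp
qed

lemma op_of_expand:
  assumes qb: "two_sided_qbanach lm rm"
  shows "op_of lm Ts v = Ts 0 v + (lm (qe 1) (Ts 1 v) + lm (qe 2) (Ts 2 v) + lm (qe 3) (Ts 3 v))"
  unfolding op_of_def sum4 qe0 lm_one[OF qb] by (simp add: add.assoc)

lemma op_of_conj_expand:
  assumes qb: "two_sided_qbanach lm rm"
  shows "op_of lm (conj_comps Ts) v = Ts 0 v - (lm (qe 1) (Ts 1 v) + lm (qe 2) (Ts 2 v) + lm (qe 3) (Ts 3 v))"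
  unfolding op_of_def sum4 qe0 lm_one[OF qb] by (simp add: conj_comps_def lm_minus[OF qb])

lemma conj_conj: "conj_comps (conj_comps Ts) = Ts"
  by (rule ext, rule ext) (simp add: conj_comps_def)

lemma dom_sq_char:
  assumes qb: "two_sided_qbanach lm rm" and KC: "in_KC lm rm D Ts"
  shows "dom_sq lm D Ts = {v \<in> D. \<forall>j<4. Ts j v \<in> D}"
proof
  have "\<forall>j<4. dom_sq lm D Ts \<subseteq> {v \<in> D. Ts j v \<in> D}" using KC by (simp add: in_KC_def)
  thus "dom_sq lm D Ts \<subseteq> {v \<in> D. \<forall>j<4. Ts j v \<in> D}" by (auto simp: dom_sq_def)
next
  have sub: "two_sided_subspace lm rm D" using KC by (simp add: in_KC_def)
  show "{v \<in> D. \<forall>j<4. Ts j v \<in> D} \<subseteq> dom_sq lm D Ts"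
  proof safe
    fix v assume v: "v \<in> D" and j: "\<forall>j<4. Ts j v \<in> D"
    have "op_of lm Ts v \<in> D" unfolding op_of_def sum4
      using j by (intro subspace_facts[OF qb sub]) auto
    thus "v \<in> dom_sq lm D Ts" using v unfolding dom_sq_def by blast
  qed
qed

lemma dom_sq_conj:
  assumes qb: "two_sided_qbanach lm rm" and KC: "in_KC lm rm D Ts" and KCc: "in_KC lm rm D (conj_comps Ts)"
  shows "dom_sq lm D (conj_comps Ts) = dom_sq lm D Ts"
proof -
  have sub: "two_sided_subspace lm rm D" using KC by (simp add: in_KC_def)
  have "\<And>v j. v \<in> D \<Longrightarrow> conj_comps Ts j v \<in> D \<longleftrightarrow> Ts j v \<in> D"
    unfolding conj_comps_def using subspace_facts(4)[OF qb sub] by force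
  thus ?thesis unfolding dom_sq_char[OF qb KC] dom_sq_char[OF qb KCc] by blast
qed

lemma Qcs_conj:
  assumes qb: "two_sided_qbanach lm rm" and KC: "in_KC lm rm D Ts" and z: "z \<in> dom_sq lm D Ts"
  shows "Qcs lm (conj_comps Ts) s z = Qcs lm Ts s z"
proof -
  have "\<And>i. i < 4 \<Longrightarrow> conj_comps Ts i (conj_comps Ts i z) = Ts i (Ts i z)"
  proof -
    fix i :: nat assume i: "i < 4"
    have lin: "two_sided_linear_on lm rm D (Ts i)" using KC i by (simp add: in_KC_def)
    have "Ts i z \<in> D" using dom_sq_char[OF qb KC] z i by blast
    thus "conj_comps Ts i (conj_comps Ts i z) = Ts i (Ts i z)"
      unfolding conj_comps_def using lin_minus[OF qb lin] by simp
  qed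
  hence "(\<Sum>i<4. conj_comps Ts i (conj_comps Ts i z)) = (\<Sum>i<4. Ts i (Ts i z))"
    by (intro sum.cong) auto
  thus ?thesis unfolding Qcs_def by (simp add: conj_comps_def)
qed


lemma closure_sector_sub:
  "closure (sector \<omega>) \<subseteq> {x. norm x * cos \<omega> \<le> x$0}" if "\<omega> \<le> pi"
proof (rule closure_minimal)
  show "sector \<omega> \<subseteq> {x. norm x * cos \<omega> \<le> x$0}"
    using sector_imp[OF _ that] by (auto intro: less_imp_le)
  show "closed {x::quat. norm x * cos \<omega> \<le> x$0}"
    by (intro closed_Collect_le continuous_intros)
qed

lemma region_resolvent:
  assumes "0 < \<omega>" "\<omega> < \<theta>" "\<theta> < pi" "s \<notin> sector \<theta>" "s \<noteq> 0"
    and sp: "S_spectrum lm D Ts \<subseteq> closure (sector \<omega>)"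
  shows "bij_betw (Qcs lm Ts s) (dom_sq lm D Ts) UNIV"
proof -
  have "\<not> (norm s * cos \<theta> < s$0)" using assms sector_iff[of \<theta> s] by auto
  moreover have "cos \<theta> < cos \<omega>" using assms by (subst cos_mono_less_eq) auto
  moreover have "norm s > 0" using assms by simp
  ultimately have "s$0 < norm s * cos \<omega>" by (smt (verit) mult_strict_left_mono)
  hence "s \<notin> closure (sector \<omega>)" using closure_sector_sub[of \<omega>] assms by force
  hence "s \<in> S_resolvent_set lm D Ts" using sp unfolding S_spectrum_def by blast
  thus ?thesis unfolding S_resolvent_set_def by simp
qed

lemma region_scale:
  assumes "0 < \<theta>" "\<theta> < pi" "s \<notin> sector \<theta>" "c > 0"
  shows "c *\<^sub>R s \<notin> sector \<theta>"
proof
  assume "c *\<^sub>R s \<in> sector \<theta>"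
  hence "norm (c *\<^sub>R s) * cos \<theta> < (c *\<^sub>R s)$0" "c *\<^sub>R s \<noteq> 0" using sector_iff[OF assms(1,2)] by auto
  hence "c * (norm s * cos \<theta>) < c * s$0" "s \<noteq> 0" using assms(4) by (auto simp: mult.assoc)
  hence "norm s * cos \<theta> < s$0" using assms(4) by (simp add: mult_less_cancel_left_pos)
  thus False using assms \<open>s \<noteq> 0\<close> sector_iff[OF assms(1,2)] by auto
qed

lemma half_lin: "(x::real) \<le> q + 1/2 * (a + x) \<Longrightarrow> x \<le> 2 * q + a" by (simp add: field_simps)

lemma final_ineq:
  fixes n \<alpha> X W P Y S \<delta> K :: real
  assumes S: "S > 0" and d: "\<delta> > 0" and K: "K \<ge> 0" and Kd: "K * \<delta> \<le> 1/2"
    and ha: "\<alpha> \<le> K / S * n" and hX: "X \<le> K / S * W" and hW: "W \<le> n + \<delta> * S * (\<alpha> + X)"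
    and hP: "\<delta> * P \<le> \<alpha> + X" and hY: "Y \<le> P / S" and a0: "\<alpha> \<ge> 0" and X0: "X \<ge> 0"
  shows "Y \<le> 4 * K / (\<delta> * S^2) * n"
proof -
  have KS: "K / S \<ge> 0" using K S by simp
  have "X \<le> K / S * (n + \<delta> * S * (\<alpha> + X))" using hX hW KS by (meson mult_left_mono order_trans)
  also have "\<dots> = K / S * n + (K * \<delta>) * (\<alpha> + X)" using S by (simp add: field_simps)
  finally have X1: "X \<le> K / S * n + (K * \<delta>) * (\<alpha> + X)" .
  have "(K * \<delta>) * (\<alpha> + X) \<le> 1/2 * (\<alpha> + X)" using Kd a0 X0 by (intro mult_right_mono) auto
  hence "X \<le> K / S * n + 1/2 * (\<alpha> + X)" using X1 by linarith
  hence "X \<le> 2 * (K / S * n) + \<alpha>" by (rule half_lin)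
  hence "\<alpha> + X \<le> 4 * (K / S * n)" using ha by simp
  hence "\<delta> * P \<le> 4 * (K / S * n)" using hP by simp
  hence "P \<le> 4 * (K / S * n) / \<delta>" using d by (metis pos_le_divide_eq mult.commute)
  hence "P / S \<le> 4 * (K / S * n) / \<delta> / S" using S by (metis divide_right_mono less_imp_le)
  also have "\<dots> = 4 * K / (\<delta> * S^2) * n" by (simp add: field_simps power2_eq_square)
  finally show ?thesis using hY by simp
qed


lemma vid1: fixes P T :: "'a::real_vector"
  shows "d *\<^sub>R ((P - T) + ((1+d) *\<^sub>R P - T)) = (d * (2 + d)) *\<^sub>R P - (2 * d) *\<^sub>R T"
proof -
  have e1: "d * (2 + d) = d + d * (1 + d)" "2 * d = d + d" by (simp_all add: algebra_simps)
  show ?thesis unfolding e1 scaleR_add_left scaleR_add_right scaleR_diff_right scaleR_scaleR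
    by (simp add: algebra_simps)
qed
lemma vid2: fixes P T B :: "'a::real_vector"
  shows "((1+d)^2) *\<^sub>R P - (2*(1+d)) *\<^sub>R T + B = (P - 2 *\<^sub>R T + B) + ((d*(2+d)) *\<^sub>R P - (2*d) *\<^sub>R T)"
proof -
  have e1: "(1+d)^2 = 1 + d*(2+d)" "2*(1+d) = 2 + 2*d" by (simp_all add: power2_eq_square algebra_simps)
  show ?thesis unfolding e1 scaleR_add_left by simp
qed

theorem lemma2p7:
  fixes lm :: "quat \<Rightarrow> 'v::banach \<Rightarrow> 'v" and rm :: "'v \<Rightarrow> quat \<Rightarrow> 'v"
    and D :: "'v set" and Ts :: "nat \<Rightarrow> 'v \<Rightarrow> 'v" and \<omega> :: real
  assumes "two_sided_qbanach lm rm"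
    and "0 < \<omega>" and "\<omega> < pi"
    and "in_KC lm rm D Ts"
    and "of_type lm rm D Ts \<omega>"
    and "of_type lm rm D (conj_comps Ts) \<omega>"
  shows "\<forall>\<theta>. \<omega> < \<theta> \<and> \<theta> < pi \<longrightarrow> (\<exists>C\<ge>0. \<forall>s \<in> (UNIV - sector \<theta>) - {0}.
           op_norm_le (Qcs_inv lm D Ts s) (C / norm s ^ 2))"
proof (intro allI impI)
  fix \<theta> assume th: "\<omega> < \<theta> \<and> \<theta> < pi"
  have qb: "two_sided_qbanach lm rm" and KC: "in_KC lm rm D Ts" using assms by auto
  have KCc: "in_KC lm rm D (conj_comps Ts)" using assms(6) by (simp add: of_type_def)
  have sp1: "S_spectrum lm D Ts \<subseteq> closure (sector \<omega>)" using assms(5) by (simp add: of_type_def)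
  have sp2: "S_spectrum lm D (conj_comps Ts) \<subseteq> closure (sector \<omega>)" using assms(6) by (simp add: of_type_def)
  have "\<exists>C\<ge>0. \<forall>s \<in> (UNIV - sector \<theta>) - {0}.
        op_norm_le (SL_inv lm D Ts s) (C / norm s) \<and> op_norm_le (SR_inv lm D Ts s) (C / norm s)"
    using assms(5) th unfolding of_type_def by blast
  then obtain C1 where C1: "C1 \<ge> 0" "\<And>s. s \<notin> sector \<theta> \<Longrightarrow> s \<noteq> 0 \<Longrightarrow> op_norm_le (SL_inv lm D Ts s) (C1 / norm s)"
    by blast
  have "\<exists>C\<ge>0. \<forall>s \<in> (UNIV - sector \<theta>) - {0}.
        op_norm_le (SL_inv lm D (conj_comps Ts) s) (C / norm s) \<and> op_norm_le (SR_inv lm D (conj_comps Ts) s) (C / norm s)"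
    using assms(6) th unfolding of_type_def by blast
  then obtain C2 where C2: "C2 \<ge> 0" "\<And>s. s \<notin> sector \<theta> \<Longrightarrow> s \<noteq> 0 \<Longrightarrow> op_norm_le (SL_inv lm D (conj_comps Ts) s) (C2 / norm s)"
    by blast
  define K where "K = C1 + C2"
  have K0: "K \<ge> 0" unfolding K_def using C1 C2 by simp
  have th0: "0 < \<theta>" "\<theta> < pi" using th assms by auto
  have apriori: "norm (lm s z - Ts 0 z) \<le> K / norm s * norm (Qcs lm Ts s z)"
    if s: "s \<notin> sector \<theta>" "s \<noteq> 0" and z: "z \<in> dom_sq lm D Ts" for s z
  proof -
    have bij1: "bij_betw (Qcs lm Ts s) (dom_sq lm D Ts) UNIV"
      using region_resolvent[OF assms(2) _ _ s sp1] th by auto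
    have bij2: "bij_betw (Qcs lm (conj_comps Ts) s) (dom_sq lm D (conj_comps Ts)) UNIV"
      using region_resolvent[OF assms(2) _ _ s sp2] th by auto
    define v where "v = Qcs lm Ts s z"
    have inv1: "Qcs_inv lm D Ts s v = z" unfolding Qcs_inv_def v_def
      by (rule the_inv_into_f_f[OF bij_betw_imp_inj_on[OF bij1] z])
    have z2: "z \<in> dom_sq lm D (conj_comps Ts)" using z dom_sq_conj[OF qb KC KCc] by simp
    have v2: "Qcs lm (conj_comps Ts) s z = v" unfolding v_def by (rule Qcs_conj[OF qb KC z])
    have inv2: "Qcs_inv lm D (conj_comps Ts) s v = z" unfolding Qcs_inv_def v2[symmetric]
      by (rule the_inv_into_f_f[OF bij_betw_imp_inj_on[OF bij2] z2])
    define N where "N = lm (qe 1) (Ts 1 z) + lm (qe 2) (Ts 2 z) + lm (qe 3) (Ts 3 z)"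
    have SL1: "SL_inv lm D Ts s v = lm s z - (Ts 0 z - N)"
      unfolding SL_inv_def inv1 op_of_conj_expand[OF qb] N_def ..
    have SL2: "SL_inv lm D (conj_comps Ts) s v = lm s z - (Ts 0 z + N)"
      unfolding SL_inv_def inv2 conj_conj op_of_expand[OF qb] N_def ..
    have "2 *\<^sub>R (lm s z - Ts 0 z) = SL_inv lm D Ts s v + SL_inv lm D (conj_comps Ts) s v"
      unfolding SL1 SL2 by (simp add: scaleR_2 algebra_simps)
    hence "2 * norm (lm s z - Ts 0 z) \<le> norm (SL_inv lm D Ts s v) + norm (SL_inv lm D (conj_comps Ts) s v)"
      by (metis norm_scaleR abs_numeral norm_triangle_ineq)
    also have "\<dots> \<le> C1 / norm s * norm v + C2 / norm s * norm v"
      using C1(2)[OF s] C2(2)[OF s] unfolding op_norm_le_def by (intro add_mono) auto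
    also have "\<dots> = K / norm s * norm v" unfolding K_def by (simp add: add_divide_distrib distrib_right)
    finally have "2 * norm (lm s z - Ts 0 z) \<le> K / norm s * norm v" .
    moreover have "K / norm s * norm v \<ge> 0" using K0 by simp
    ultimately show ?thesis unfolding v_def by simp
  qed
  define \<delta> :: real where "\<delta> = 1 / (2 * K + 1)"
  have d0: "\<delta> > 0" unfolding \<delta>_def using K0 by simp
  have Kd: "K * \<delta> \<le> 1/2" unfolding \<delta>_def using K0 by (simp add: field_simps)
  define C where "C = 4 * K / \<delta>"
  show "\<exists>C\<ge>0. \<forall>s \<in> (UNIV - sector \<theta>) - {0}. op_norm_le (Qcs_inv lm D Ts s) (C / norm s ^ 2)"
  proof (intro exI[of _ C] conjI ballI)
    show "C \<ge> 0" unfolding C_def using K0 d0 by simp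
    fix s assume "s \<in> (UNIV - sector \<theta>) - {0}"
    hence s: "s \<notin> sector \<theta>" "s \<noteq> 0" by auto
    have S: "norm s > 0" using s by simp
    have bij1: "bij_betw (Qcs lm Ts s) (dom_sq lm D Ts) UNIV"
      using region_resolvent[OF assms(2) _ _ s sp1] th by auto
    show "op_norm_le (Qcs_inv lm D Ts s) (C / norm s ^ 2)"
      unfolding op_norm_le_def
    proof
      fix v
      define y where "y = Qcs_inv lm D Ts s v"
      have y: "y \<in> dom_sq lm D Ts" unfolding y_def Qcs_inv_def
        using bij1 by (metis UNIV_I bij_betw_def bij_betw_imp_inj_on the_inv_into_into order_refl)
      have Qy: "Qcs lm Ts s y = v" unfolding y_def Qcs_inv_def
        using bij1 by (rule f_the_inv_into_f_bij_betw) simp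
      define \<mu> where "\<mu> = (1 + \<delta>) *\<^sub>R s"
      have mu: "\<mu> \<notin> sector \<theta>" "\<mu> \<noteq> 0" unfolding \<mu>_def using region_scale[OF th0 s(1), of "1 + \<delta>"] d0 s
        by auto
      have nmu: "norm \<mu> = (1 + \<delta>) * norm s" unfolding \<mu>_def using d0 by simp
      define t where "t = Ts 0 y"
      define B where "B = (\<Sum>i<4. Ts i (Ts i y))"
      define a where "a = lm s y - t"
      define b where "b = lm \<mu> y - t"
      define w where "w = Qcs lm Ts \<mu> y"
      have ha: "norm a \<le> K / norm s * norm v" using apriori[OF s y] unfolding a_def t_def Qy .
      have hb0: "norm b \<le> K / norm \<mu> * norm w" using apriori[OF mu y] unfolding b_def t_def w_def .
      have "norm s \<le> norm \<mu>" unfolding nmu using d0 S by simp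
      hence "K / norm \<mu> \<le> K / norm s" using K0 S by (intro frac_le) auto
      hence "K / norm \<mu> * norm w \<le> K / norm s * norm w" by (rule mult_right_mono) simp
      hence hb: "norm b \<le> K / norm s * norm w" using hb0 by simp
      have lmmu: "lm \<mu> x = (1 + \<delta>) *\<^sub>R lm s x" for x unfolding \<mu>_def by (rule lm_scaleRq[OF qb])
      have veq: "v = lm s (lm s y) - 2 *\<^sub>R lm s t + B"
        unfolding Qy[symmetric] Qcs_def B_def t_def lm_mult[OF qb] lm_qreal[OF qb] ..
      have weq: "w = ((1 + \<delta>)^2) *\<^sub>R lm s (lm s y) - (2 * (1 + \<delta>)) *\<^sub>R lm s t + B"
        unfolding w_def Qcs_def B_def t_def lm_mult[OF qb] lm_qreal[OF qb] lmmu lm_scaleR[OF qb]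
        by (simp add: power2_eq_square)
      have abeq: "\<delta> *\<^sub>R lm s (a + b) = (\<delta> * (2 + \<delta>)) *\<^sub>R lm s (lm s y) - (2 * \<delta>) *\<^sub>R lm s t"
        unfolding a_def b_def lmmu lm_add[OF qb] lm_diff[OF qb] lm_scaleR[OF qb]
        by (rule vid1)
      have "w = v + \<delta> *\<^sub>R lm s (a + b)"
        unfolding weq veq abeq by (rule vid2)
      hence n1: "norm w \<le> norm v + \<delta> * norm (lm s (a + b))"
        using d0 norm_triangle_ineq[of v "\<delta> *\<^sub>R lm s (a + b)"] by simp
      have "norm (lm s (a + b)) \<le> norm s * norm (a + b)" by (rule lm_norm[OF qb])
      also have "\<dots> \<le> norm s * (norm a + norm b)" by (intro mult_left_mono norm_triangle_ineq) simp
      finally have "\<delta> * norm (lm s (a + b)) \<le> \<delta> * (norm s * (norm a + norm b))"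
        using d0 by (intro mult_left_mono) auto
      moreover have "\<delta> * norm s * (norm a + norm b) = \<delta> * (norm s * (norm a + norm b))" by simp
      ultimately have hW: "norm w \<le> norm v + \<delta> * norm s * (norm a + norm b)" using n1 by linarith
      have "b - a = \<delta> *\<^sub>R lm s y" unfolding a_def b_def lmmu by (simp add: algebra_simps)
      hence "norm (b - a) = \<delta> * norm (lm s y)" using d0 by simp
      moreover have "norm (b - a) \<le> norm b + norm a" by (rule norm_triangle_ineq4)
      ultimately have hP: "\<delta> * norm (lm s y) \<le> norm a + norm b" by linarith
      have hY: "norm y \<le> norm (lm s y) / norm s"
        using norm_lm_ge[OF qb s(2), of y] S by (simp add: pos_le_divide_eq mult.commute)
      have "norm y \<le> 4 * K / (\<delta> * (norm s)^2) * norm v"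
        by (rule final_ineq[OF S d0 K0 Kd ha hb hW hP hY norm_ge_zero norm_ge_zero])
      also have "\<dots> = C / norm s ^ 2 * norm v" unfolding C_def by simp
      finally show "norm (Qcs_inv lm D Ts s v) \<le> C / norm s ^ 2 * norm v" unfolding y_def .
    qed
  qed
qed

end
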